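(* Let $(G,*,\le)$ be a totally ordered commutative semigroup, let $n\ge 1$, and let $a_1,a_2,\ldots,a_{2n}\in G$ (not necessarily distinct) with $a_1\le a_2\le\cdots\le a_{2n}$. Let $N\in G$. Suppose there are indices $i_1,j_1,\ldots,i_n,j_n$ with $\{i_1,j_1,\ldots,i_n,j_n\}=\{1,2,\ldots,2n\}$ (so these $2n$ indices are pairwise distinct and each of $1,\ldots,2n$ is used exactly once) such that $$a_{i_k}*a_{j_k}<N\quad\text{for all }k=1,\ldots,n.$$ Then $$a_k*a_{2n+1-k}<N\quad\text{for all }k=1,\ldots,n,$$ i.e. $a_1*a_{2n}<N$, $a_2*a_{2n-1}<N$, $\ldots$, $a_n*a_{n+1}<N$.
   Context: A totally ordered commutative semigroup is a triple $(G,*,\le)$ where $(G,* )$ is a commutative semigroup (an associative, commutative binary operation $*$ on a set $G$) and $\le$ is a total order on $G$ such that for all $\alpha,\beta,\gamma,\delta\in G$: if $\alpha\le\beta$ and $\gamma\le\delta$ then $\alpha*\gamma\le\beta*\delta$. Here $x<y$ means $x\le y$ and $x\ne y$. *)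

theory Defs
  imports Main
begin

definition tocs :: "('a \<Rightarrow> 'a \<Rightarrow> 'a) \<Rightarrow> ('a \<Rightarrow> 'a \<Rightarrow> bool) \<Rightarrow> bool" where
  "tocs mult le \<longleftrightarrow>
     (\<forall>x y z. mult (mult x y) z = mult x (mult y z)) \<and>
     (\<forall>x y. mult x y = mult y x) \<and>
     (\<forall>x. le x x) \<and>
     (\<forall>x y. le x y \<longrightarrow> le y x \<longrightarrow> x = y) \<and>
     (\<forall>x y z. le x y \<longrightarrow> le y z \<longrightarrow> le x z) \<and>
     (\<forall>x y. le x y \<or> le y x) \<and>
     (\<forall>\<alpha> \<beta> \<gamma> \<delta>. le \<alpha> \<beta> \<longrightarrow> le \<gamma> \<delta> \<longrightarrow> le (mult \<alpha> \<gamma>) (mult \<beta> \<delta>))"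

definition strict_of :: "('a \<Rightarrow> 'a \<Rightarrow> bool) \<Rightarrow> 'a \<Rightarrow> 'a \<Rightarrow> bool" where
  "strict_of le x y \<longleftrightarrow> le x y \<and> x \<noteq> y"

end

theory Submission
  imports Defs
begin

theorem theorem2p2:
  fixes mult :: "'a \<Rightarrow> 'a \<Rightarrow> 'a" and le :: "'a \<Rightarrow> 'a \<Rightarrow> bool"
    and n :: nat and a :: "nat \<Rightarrow> 'a" and N :: 'a and i j :: "nat \<Rightarrow> nat"
  assumes "tocs mult le"
    and "n \<ge> 1"
    and "\<forall>k. 1 \<le> k \<and> k < 2 * n \<longrightarrow> le (a k) (a (k + 1))"
    and "i ` {1..n} \<union> j ` {1..n} = {1..2 * n}"
    and "\<forall>k\<in>{1..n}. strict_of le (mult (a (i k)) (a (j k))) N"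
  shows "\<forall>k\<in>{1..n}. strict_of le (mult (a k) (a (2 * n + 1 - k))) N"
proof
  fix k assume k: "k \<in> {1..n}"
  have refl: "\<And>x. le x x" and antis: "\<And>x y. le x y \<Longrightarrow> le y x \<Longrightarrow> x = y"
    and trans: "\<And>x y z. le x y \<Longrightarrow> le y z \<Longrightarrow> le x z"
    and mono: "\<And>x y u v. le x y \<Longrightarrow> le u v \<Longrightarrow> le (mult x u) (mult y v)"
    and comm: "\<And>x y. mult x y = mult y x"
    using assms(1) unfolding tocs_def by simp_all
  have amono0: "le (a p) (a (p+d))" if "1 \<le> p" "p + d \<le> 2*n" for p d
    using that
  proof (induction d)
    case 0 show ?case using refl by simp
  next
    case (Suc d)
    have h1: "le (a p) (a (p+d))" using Suc by simp
    have h2: "le (a (p+d)) (a (p+d+1))" using assms(3) Suc.prems by auto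
    show ?case using trans[OF h1 h2] by simp
  qed
  have amono: "le (a p) (a q)" if "1 \<le> p" "p \<le> q" "q \<le> 2*n" for p q
    using amono0[of p "q-p"] that by simp
  define e where "e = (\<lambda>(m::nat, b::bool). if b then i m else j m)"
  have eimg: "e ` ({1..n} \<times> UNIV) = {1..2*n}"
  proof -
    have "e ` ({1..n} \<times> UNIV) = i ` {1..n} \<union> j ` {1..n}"
    proof (rule set_eqI, rule iffI)
      fix x assume "x \<in> e ` ({1..n} \<times> UNIV)"
      then obtain m b where "m \<in> {1..n}" "x = e (m,b)" by auto
      thus "x \<in> i ` {1..n} \<union> j ` {1..n}" unfolding e_def by (cases b) auto
    next
      fix x assume "x \<in> i ` {1..n} \<union> j ` {1..n}"
      then obtain m where "m \<in> {1..n}" "x = i m \<or> x = j m" by auto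
      hence "x = e (m, True) \<or> x = e (m, False)" "m \<in> {1..n}" unfolding e_def by auto
      thus "x \<in> e ` ({1..n} \<times> UNIV)" by blast
    qed
    then show ?thesis using assms(4) by simp
  qed
  have cA: "card ({1..n} \<times> (UNIV::bool set)) = 2*n" by (simp add: card_cartesian_product)
  have cB: "card (e ` ({1..n} \<times> UNIV)) = 2*n" unfolding eimg by simp
  have einj: "inj_on e ({1..n} \<times> UNIV)"
    by (rule eq_card_imp_inj_on) (simp, simp only: cA cB)
  have key: "\<exists>m\<in>{1..n}. (i m \<ge> 2*n+1-k \<and> j m \<ge> k) \<or> (j m \<ge> 2*n+1-k \<and> i m \<ge> k)"
  proof (rule ccontr)
    assume bad: "\<not> ?thesis"
    define K where "K = {m\<in>{1..n}. max (i m) (j m) \<ge> 2*n+1-k}"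
    have Ksub: "K \<subseteq> {1..n}" unfolding K_def by auto
    have minK: "(\<lambda>m. min (i m) (j m)) ` K \<subseteq> {1..k-1}"
    proof
      fix x assume "x \<in> (\<lambda>m. min (i m) (j m)) ` K"
      then obtain m where m: "m \<in> K" "x = min (i m) (j m)" by auto
      have mn: "m \<in> {1..n}" using m(1) Ksub by blast
      have "i m \<in> {1..2*n}" "j m \<in> {1..2*n}" using mn assms(4) by blast+
      moreover have "x < k" using bad m k unfolding K_def by (auto simp: max_def min_def)
      ultimately show "x \<in> {1..k-1}" using m by auto
    qed
    have minj: "inj_on (\<lambda>m. min (i m) (j m)) K"
    proof
      fix m m' assume mm: "m \<in> K" "m' \<in> K" "min (i m) (j m) = min (i m') (j m')"
      have me: "\<And>m. min (i m) (j m) = e (m, i m \<le> j m)" unfolding e_def min_def by simp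
      have "e (m, i m \<le> j m) = e (m', i m' \<le> j m')" using mm(3) by (simp only: me[symmetric])
      moreover have "(m, i m \<le> j m) \<in> {1..n} \<times> UNIV" "(m', i m' \<le> j m') \<in> {1..n} \<times> UNIV"
        using mm(1,2) Ksub by auto
      ultimately have "(m, i m \<le> j m) = (m', i m' \<le> j m')" by (rule inj_onD[OF einj])
      thus "m = m'" by simp
    qed
    have "{2*n+1-k..2*n} \<subseteq> (\<lambda>m. max (i m) (j m)) ` K"
    proof
      fix t assume t: "t \<in> {2*n+1-k..2*n}"
      hence "t \<in> e ` ({1..n} \<times> UNIV)" using eimg k by auto
      then obtain m b where mb: "m \<in> {1..n}" "t = e (m, b)" by auto
      hence tt: "t = i m \<or> t = j m" unfolding e_def by (cases b) auto
      have "max (i m) (j m) \<ge> 2*n+1-k" using tt t by auto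
      hence mK: "m \<in> K" using mb unfolding K_def by auto
      have "t = max (i m) (j m)" using bad mb tt t k by (auto simp: max_def)
      thus "t \<in> (\<lambda>m. max (i m) (j m)) ` K" using mK by auto
    qed
    hence "card {2*n+1-k..2*n} \<le> card ((\<lambda>m. max (i m) (j m)) ` K)"
      using Ksub by (intro card_mono) (auto intro: finite_subset)
    also have "\<dots> \<le> card K" by (rule card_image_le) (use Ksub in \<open>auto intro: finite_subset\<close>)
    also have "\<dots> = card ((\<lambda>m. min (i m) (j m)) ` K)" using minj by (simp add: card_image)
    also have "\<dots> \<le> card {1..k-1}" using minK by (intro card_mono) auto
    finally show False using k by auto
  qed
  then obtain m where m: "m \<in> {1..n}"
    and mm: "(i m \<ge> 2*n+1-k \<and> j m \<ge> k) \<or> (j m \<ge> 2*n+1-k \<and> i m \<ge> k)" by blast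
  have rng: "i m \<in> {1..2*n}" "j m \<in> {1..2*n}" using m assms(4) by blast+
  have lt: "le (mult (a (i m)) (a (j m))) N" "mult (a (i m)) (a (j m)) \<noteq> N"
    using assms(5) m unfolding strict_of_def by auto
  have ble: "le (mult (a k) (a (2*n+1-k))) (mult (a (i m)) (a (j m)))"
    using mm
  proof
    assume h: "2*n+1-k \<le> i m \<and> k \<le> j m"
    have "le (mult (a (2*n+1-k)) (a k)) (mult (a (i m)) (a (j m)))"
      using h rng k by (intro mono amono) auto
    thus ?thesis by (simp add: comm)
  next
    assume h: "2*n+1-k \<le> j m \<and> k \<le> i m"
    show ?thesis using h rng k by (intro mono amono) auto
  qed
  have "le (mult (a k) (a (2*n+1-k))) N" by (rule trans[OF ble lt(1)])
  moreover have "mult (a k) (a (2*n+1-k)) \<noteq> N"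
  proof
    assume eq: "mult (a k) (a (2*n+1-k)) = N"
    have "mult (a (i m)) (a (j m)) = N" using antis[OF lt(1)] ble eq by simp
    with lt(2) show False by simp
  qed
  ultimately show "strict_of le (mult (a k) (a (2 * n + 1 - k))) N" unfolding strict_of_def by simp
qed

end
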